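(* Let $n\ge 2$ be an integer and let $\mathbb{K}$ be a field such that $\operatorname{char}\mathbb{K}$ is either $0$ or coprime to both $n$ and $n-1$. Let $A_n=\mathbb{K}[x,y]/I_n$, where $I_n=(y^{2n+3},\; x^ny^2-y^{n+2},\; x^{2n+1}-xy^{n+1})$, and let $\mathfrak{m}_n$ be the ideal of $A_n$ generated by (the images of) $x,y$. Then the one-dimensional subspace $\langle y^{2n+1}\rangle\subseteq\mathfrak{m}_n$ is invariant under the automorphism group $\operatorname{Aut}(A_n)$ of the $\mathbb{K}$-algebra $A_n$. More precisely, for every $a\in\operatorname{Aut}(A_n)$ there is a scalar $\gamma_a\in\mathbb{K}$ with $a(y^{2n+1})=\gamma_a y^{2n+1}$, and $\gamma_a^{(n-1)/3}=1$ if $n\equiv 1 \pmod 3$, while $\gamma_a^{\,n-1}=1$ otherwise.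
   Context: All algebras are associative, commutative, with unity; $\operatorname{Aut}(A_n)$ denotes the group of unital $\mathbb{K}$-algebra automorphisms of $A_n$. Monomials such as $y^{2n+1}$ are regarded as elements of $A_n$ via the quotient map. (The paper shows $A_n$ is a finite-dimensional local algebra with maximal ideal $\mathfrak{m}_n$.) *)

theory Defs
  imports "HOL-Computational_Algebra.Polynomial"
begin

text \<open>Bivariate polynomials K[x,y] are represented as K[x][y], i.e. the type
  ('a poly) poly: outer variable y, coefficients in K[x].\<close>

definition var_x :: "'a::comm_ring_1 poly poly" where
  "var_x = [:[:0, 1:]:]"

definition var_y :: "'a::comm_ring_1 poly poly" where
  "var_y = [:0, 1:]"

definition const2 :: "'a::comm_ring_1 \<Rightarrow> 'a poly poly" where
  "const2 c = [:[:c:]:]"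

definition I_n :: "nat \<Rightarrow> 'a::comm_ring_1 poly poly set" where
  "I_n n = {g1 * var_y ^ (2*n+3)
            + g2 * (var_x ^ n * var_y ^ 2 - var_y ^ (n+2))
            + g3 * (var_x ^ (2*n+1) - var_x * var_y ^ (n+1)) | g1 g2 g3. True}"

definition cong_A :: "nat \<Rightarrow> 'a::comm_ring_1 poly poly \<Rightarrow> 'a poly poly \<Rightarrow> bool" where
  "cong_A n p q \<longleftrightarrow> p - q \<in> I_n n"

definition is_aut_A :: "nat \<Rightarrow> ('a::field poly poly \<Rightarrow> 'a poly poly) \<Rightarrow> bool" where
  "is_aut_A n \<phi> \<longleftrightarrow>
     (\<forall>p q. cong_A n p q \<longrightarrow> cong_A n (\<phi> p) (\<phi> q)) \<and>
     (\<forall>p q. cong_A n (\<phi> (p + q)) (\<phi> p + \<phi> q)) \<and>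
     (\<forall>p q. cong_A n (\<phi> (p * q)) (\<phi> p * \<phi> q)) \<and>
     (\<forall>c p. cong_A n (\<phi> (const2 c * p)) (const2 c * \<phi> p)) \<and>
     cong_A n (\<phi> 1) 1 \<and>
     (\<forall>p q. cong_A n (\<phi> p) (\<phi> q) \<longrightarrow> cong_A n p q) \<and>
     (\<forall>q. \<exists>p. cong_A n (\<phi> p) q)"

end

theory Submission
  imports Defs
begin

definition c2 :: "'a::comm_ring_1 poly poly \<Rightarrow> nat \<Rightarrow> nat \<Rightarrow> 'a" where
  "c2 p i j = coeff (coeff p j) i"

definition M :: "'a::comm_ring_1 \<Rightarrow> nat \<Rightarrow> nat \<Rightarrow> 'a poly poly" where
  "M c i j = monom (monom c i) j"

lemma c2_add[simp]: "c2 (p + q) i j = c2 p i j + c2 q i j"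
  by (simp add: c2_def)
lemma c2_diff[simp]: "c2 (p - q) i j = c2 p i j - c2 q i j"
  by (simp add: c2_def)
lemma c2_minus[simp]: "c2 (- p) i j = - c2 p i j"
  by (simp add: c2_def)
lemma c2_0[simp]: "c2 0 i j = 0"
  by (simp add: c2_def)
lemma c2_sum: "c2 (sum f A) i j = (\<Sum>a\<in>A. c2 (f a) i j)"
  by (induction A rule: infinite_finite_induct) auto

lemma var_x_M: "var_x = M 1 1 0"
  by (simp add: var_x_def M_def monom_0 monom_Suc)
lemma var_y_M: "var_y = M 1 0 1"
  by (simp add: var_y_def M_def monom_0 monom_Suc)
lemma const2_M: "const2 c = M c 0 0"
  by (simp add: const2_def M_def monom_0)
lemma one_M: "1 = M 1 0 0"
  by (simp add: M_def monom_0 one_pCons)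

lemma M_mult: "M a i j * M b k l = M (a*b) (i+k) (j+l)"
  by (simp add: M_def mult_monom)
lemma M_power: "M a i j ^ k = M (a^k) (i*k) (j*k)"
  by (simp add: M_def monom_power)
lemma M_mult_assoc: "M a i j * (M b k l * p) = M (a*b) (i+k) (j+l) * p"
  by (simp add: M_mult flip: mult.assoc)

lemma c2_M_mult: "c2 (M c i j * p) i' j' = (if i \<le> i' \<and> j \<le> j' then c * c2 p (i'-i) (j'-j) else 0)"
  by (simp add: c2_def M_def coeff_monom_mult)

lemma c2_M: "c2 (M c i j) i' j' = (if i' = i \<and> j' = j then c else 0)"
  by (simp add: c2_def M_def coeff_monom)

lemma c2_mult: "c2 (p * q) i j = (\<Sum>l\<le>j. \<Sum>m\<le>i. c2 p m l * c2 q (i-m) (j-l))"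
  by (simp add: c2_def coeff_mult coeff_sum)


lemma I_memI: "g1 * var_y ^ (2*n+3) + g2 * (var_x ^ n * var_y ^ 2 - var_y ^ (n+2))
            + g3 * (var_x ^ (2*n+1) - var_x * var_y ^ (n+1)) \<in> I_n n"
  unfolding I_n_def by blast

lemma I_memE: assumes "p \<in> I_n n"
  obtains g1 g2 g3 where "p = g1 * var_y ^ (2*n+3) + g2 * (var_x ^ n * var_y ^ 2 - var_y ^ (n+2))
            + g3 * (var_x ^ (2*n+1) - var_x * var_y ^ (n+1))"
  using assms unfolding I_n_def by blast

lemma I_add: assumes "p \<in> I_n n" "q \<in> I_n n" shows "p + q \<in> I_n n"
proof -
  obtain a1 a2 a3 where a: "p = a1 * var_y ^ (2*n+3) + a2 * (var_x ^ n * var_y ^ 2 - var_y ^ (n+2))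
            + a3 * (var_x ^ (2*n+1) - var_x * var_y ^ (n+1))" using assms(1) by (rule I_memE)
  obtain b1 b2 b3 where b: "q = b1 * var_y ^ (2*n+3) + b2 * (var_x ^ n * var_y ^ 2 - var_y ^ (n+2))
            + b3 * (var_x ^ (2*n+1) - var_x * var_y ^ (n+1))" using assms(2) by (rule I_memE)
  have "p + q = (a1+b1) * var_y ^ (2*n+3) + (a2+b2) * (var_x ^ n * var_y ^ 2 - var_y ^ (n+2))
            + (a3+b3) * (var_x ^ (2*n+1) - var_x * var_y ^ (n+1))"
    unfolding a b by (simp add: algebra_simps)
  then show ?thesis using I_memI by metis
qed

lemma I_mult: assumes "p \<in> I_n n" shows "r * p \<in> I_n n"
proof -
  obtain a1 a2 a3 where a: "p = a1 * var_y ^ (2*n+3) + a2 * (var_x ^ n * var_y ^ 2 - var_y ^ (n+2))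
            + a3 * (var_x ^ (2*n+1) - var_x * var_y ^ (n+1))" using assms(1) by (rule I_memE)
  have "r * p = (r*a1) * var_y ^ (2*n+3) + (r*a2) * (var_x ^ n * var_y ^ 2 - var_y ^ (n+2))
            + (r*a3) * (var_x ^ (2*n+1) - var_x * var_y ^ (n+1))"
    unfolding a by (simp add: algebra_simps)
  then show ?thesis using I_memI by metis
qed

lemma I_0: "0 \<in> I_n n"
  using I_memI[of 0 n 0 0] by simp

lemma I_uminus: assumes "p \<in> I_n n" shows "- p \<in> I_n n"
  using I_mult[OF assms, of "-1"] by simp

lemma I_diff: assumes "p \<in> I_n n" "q \<in> I_n n" shows "p - q \<in> I_n n"
  using I_add[OF assms(1) I_uminus[OF assms(2)]] by simp

lemma I_G1: "var_y ^ (2*n+3) \<in> I_n n"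
  using I_memI[of 1 n 0 0] by simp
lemma I_G2: "var_x ^ n * var_y ^ 2 - var_y ^ (n+2) \<in> I_n n"
  using I_memI[of 0 n 1 0] by simp
lemma I_G3: "var_x ^ (2*n+1) - var_x * var_y ^ (n+1) \<in> I_n n"
  using I_memI[of 0 n 0 1] by simp

lemma I_sum: "(\<And>a. a \<in> A \<Longrightarrow> f a \<in> I_n n) \<Longrightarrow> sum f A \<in> I_n n"
  by (induction A rule: infinite_finite_induct) (auto intro: I_add I_0)

lemma cong_refl[simp]: "cong_A n p p"
  by (simp add: cong_A_def I_0)
lemma cong_sym: "cong_A n p q \<Longrightarrow> cong_A n q p"
  unfolding cong_A_def using I_uminus by fastforce
lemma cong_trans: "cong_A n p q \<Longrightarrow> cong_A n q r \<Longrightarrow> cong_A n p r"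
  unfolding cong_A_def using I_add by fastforce
lemma cong_add: "cong_A n p q \<Longrightarrow> cong_A n p' q' \<Longrightarrow> cong_A n (p + p') (q + q')"
  unfolding cong_A_def using I_add by (fastforce simp: algebra_simps)
lemma cong_diff: "cong_A n p q \<Longrightarrow> cong_A n p' q' \<Longrightarrow> cong_A n (p - p') (q - q')"
  unfolding cong_A_def using I_diff by (fastforce simp: algebra_simps)
lemma cong_multL: "cong_A n p q \<Longrightarrow> cong_A n (r * p) (r * q)"
  unfolding cong_A_def using I_mult by (fastforce simp: algebra_simps)
lemma cong_mult: "cong_A n p q \<Longrightarrow> cong_A n p' q' \<Longrightarrow> cong_A n (p * p') (q * q')"
proof -
  assume a: "cong_A n p q" "cong_A n p' q'"
  have "cong_A n (p * p') (p * q')" using cong_multL[OF a(2)] .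
  moreover have "cong_A n (p * q') (q * q')" using cong_multL[OF a(1), of q'] by (simp add: mult.commute)
  ultimately show ?thesis by (rule cong_trans)
qed
lemma cong_power: "cong_A n p q \<Longrightarrow> cong_A n (p ^ k) (q ^ k)"
  by (induction k) (auto intro: cong_mult)

definition Dw :: "nat \<Rightarrow> nat \<Rightarrow> nat \<Rightarrow> 'a::comm_ring_1 poly poly \<Rightarrow> bool" where
  "Dw w1 w2 k p \<longleftrightarrow> (\<forall>i j. w1*i + w2*j < k \<longrightarrow> c2 p i j = 0)"

lemma Dw_0[simp]: "Dw w1 w2 k 0" by (simp add: Dw_def)
lemma Dw_zero_ord[simp]: "Dw w1 w2 0 p" by (simp add: Dw_def)
lemma Dw_add: "Dw w1 w2 k p \<Longrightarrow> Dw w1 w2 k q \<Longrightarrow> Dw w1 w2 k (p + q)" by (simp add: Dw_def)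
lemma Dw_diff: "Dw w1 w2 k p \<Longrightarrow> Dw w1 w2 k q \<Longrightarrow> Dw w1 w2 k (p - q)" by (simp add: Dw_def)
lemma Dw_uminus: "Dw w1 w2 k p \<Longrightarrow> Dw w1 w2 k (- p)" by (simp add: Dw_def)
lemma Dw_mono: "Dw w1 w2 k p \<Longrightarrow> k' \<le> k \<Longrightarrow> Dw w1 w2 k' p" by (simp add: Dw_def)
lemma Dw_mult: assumes "Dw w1 w2 a p" "Dw w1 w2 b q" shows "Dw w1 w2 (a + b) (p * q)"
  unfolding Dw_def
proof (intro allI impI)
  fix i j assume h: "w1*i + w2*j < a + b"
  have "c2 p m l * c2 q (i-m) (j-l) = 0" if "l \<le> j" "m \<le> i" for l m
  proof (cases "w1*m + w2*l < a")
    case True then show ?thesis using assms(1) by (simp add: Dw_def)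
  next
    case False
    have "w1*m \<le> w1*i" "w2*l \<le> w2*j" using that by auto
    then have "w1*(i-m) + w2*(j-l) < b" using h False
      by (simp only: diff_mult_distrib2)
    then show ?thesis using assms(2) by (simp add: Dw_def)
  qed
  then show "c2 (p * q) i j = 0" by (simp add: c2_mult)
qed
lemma Dw_power: "Dw w1 w2 a p \<Longrightarrow> Dw w1 w2 (m * a) (p ^ m)"
  by (induction m) (auto simp: Dw_def[of _ _ 0] intro: Dw_mult[of _ _ a _ "m*a" for m, simplified add.commute] dest: Dw_mult)
lemma Dw_M: "Dw w1 w2 (w1*i + w2*j) (M c i j)" by (simp add: Dw_def c2_M)
lemma Dw_multL: "Dw w1 w2 b q \<Longrightarrow> Dw w1 w2 b (p * q)"
  using Dw_mult[of w1 w2 0 p b q] by simp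
lemma Dw_multR: "Dw w1 w2 b q \<Longrightarrow> Dw w1 w2 b (q * p)"
  using Dw_multL[of w1 w2 b q p] by (simp add: mult.commute)


definition ell :: "(nat \<times> nat) set \<Rightarrow> 'a::comm_ring_1 poly poly \<Rightarrow> 'a" where
  "ell S p = (\<Sum>s\<in>S. c2 p (fst s) (snd s))"

lemma ell_add: "ell S (p + q) = ell S p + ell S q"
  by (simp add: ell_def sum.distrib)
lemma ell_diff: "ell S (p - q) = ell S p - ell S q"
  by (simp add: ell_def sum_subtractf)

lemma ell_shift:
  assumes "finite S"
  shows "ell S (q * M 1 a b) = (\<Sum>t\<in>{t. (fst t + a, snd t + b) \<in> S}. c2 q (fst t) (snd t))"
proof -
  let ?T = "{t. (fst t + a, snd t + b) \<in> S}"
  let ?h = "\<lambda>t::nat\<times>nat. (fst t + a, snd t + b)"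
  have "ell S (q * M 1 a b) = (\<Sum>s\<in>S. if a \<le> fst s \<and> b \<le> snd s then c2 q (fst s - a) (snd s - b) else 0)"
    unfolding ell_def mult.commute[of q] c2_M_mult by (intro sum.cong) auto
  also have "\<dots> = (\<Sum>s\<in>S \<inter> {s. a \<le> fst s \<and> b \<le> snd s}. c2 q (fst s - a) (snd s - b))"
    by (simp add: sum.inter_filter[OF assms] Int_def conj_commute)
  also have "S \<inter> {s. a \<le> fst s \<and> b \<le> snd s} = ?h ` ?T"
  proof
    show "S \<inter> {s. a \<le> fst s \<and> b \<le> snd s} \<subseteq> ?h ` ?T"
    proof
      fix s assume "s \<in> S \<inter> {s. a \<le> fst s \<and> b \<le> snd s}"
      then show "s \<in> ?h ` ?T"
        by (intro image_eqI[of _ _ "(fst s - a, snd s - b)"]) auto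
    qed
  qed auto
  also have "(\<Sum>s\<in>?h ` ?T. c2 q (fst s - a) (snd s - b)) = (\<Sum>t\<in>?T. c2 q (fst t) (snd t))"
    by (subst sum.reindex) (auto simp: inj_on_def)
  finally show ?thesis .
qed

definition closedS :: "nat \<Rightarrow> (nat \<times> nat) set \<Rightarrow> bool" where
  "closedS n S \<longleftrightarrow> finite S \<and>
     (\<forall>i j. (i+n, j+2) \<in> S \<longleftrightarrow> (i, j+n+2) \<in> S) \<and>
     (\<forall>i j. (i+2*n+1, j) \<in> S \<longleftrightarrow> (i+1, j+n+1) \<in> S) \<and>
     (\<forall>i j. (i, j+2*n+3) \<notin> S)"

lemma ell_I:
  assumes "closedS n S" "p \<in> I_n n"
  shows "ell S p = 0"
proof -
  have fin: "finite S" using assms(1) by (simp add: closedS_def)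
  obtain g1 g2 g3 where p: "p = g1 * var_y ^ (2*n+3) + g2 * (var_x ^ n * var_y ^ 2 - var_y ^ (n+2))
            + g3 * (var_x ^ (2*n+1) - var_x * var_y ^ (n+1))" using assms(2) by (rule I_memE)
  have e1: "var_y ^ (2*n+3) = M 1 0 (2*n+3)" by (simp add: var_y_M M_power)
  have e2: "var_x ^ n * var_y ^ 2 = M 1 n 2" "var_y ^ (n+2) = M 1 0 (n+2)"
    by (simp_all add: var_y_M var_x_M M_power M_mult numeral_2_eq_2)
  have e3: "var_x ^ (2*n+1) = M 1 (2*n+1) 0" "var_x * var_y ^ (n+1) = M 1 1 (n+1)"
    by (simp_all add: var_y_M var_x_M M_power M_mult)
  have T1: "{t. (fst t + 0, snd t + (2*n+3)) \<in> S} = {}"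
    using assms(1) unfolding closedS_def by (auto simp: add.assoc)
  have T2: "{t. (fst t + n, snd t + 2) \<in> S} = {t. (fst t + 0, snd t + (n+2)) \<in> S}"
    using assms(1) unfolding closedS_def by (auto simp: add.assoc)
  have T3: "{t. (fst t + (2*n+1), snd t + 0) \<in> S} = {t. (fst t + 1, snd t + (n+1)) \<in> S}"
    using assms(1) unfolding closedS_def by (auto simp: add.assoc)
  have "ell S p = ell S (g1 * M 1 0 (2*n+3)) + (ell S (g2 * M 1 n 2) - ell S (g2 * M 1 0 (n+2)))
     + (ell S (g3 * M 1 (2*n+1) 0) - ell S (g3 * M 1 1 (n+1)))"
    unfolding p e1 e2 e3 by (simp add: ell_add ell_diff right_diff_distrib)
  also have "\<dots> = 0"
    unfolding ell_shift[OF fin] using T1 T2 T3 by simp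
  finally show ?thesis .
qed

lemma ell_cong: "closedS n S \<Longrightarrow> cong_A n p q \<Longrightarrow> ell S p = ell S q"
  using ell_I[of n S "p - q"] by (simp add: cong_A_def ell_diff)

lemma ell_single: "ell {(i,j)} p = c2 p i j" by (simp add: ell_def)
lemma ell_two: "(i,j) \<noteq> (k,l) \<Longrightarrow> ell {(i,j),(k,l)} p = c2 p i j + c2 p k l" by (simp add: ell_def)
lemma ell_three: "(i,j) \<noteq> (k,l) \<Longrightarrow> (i,j) \<noteq> (r,s) \<Longrightarrow> (k,l) \<noteq> (r,s) \<Longrightarrow>
   ell {(i,j),(k,l),(r,s)} p = c2 p i j + c2 p k l + c2 p r s" by (simp add: ell_def)


lemma c2_mult_00: "c2 (p * q) 0 0 = c2 p 0 0 * c2 q 0 0"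
  by (simp add: c2_mult)
lemma c2_mult_10: "c2 (p * q) 1 0 = c2 p 0 0 * c2 q 1 0 + c2 p 1 0 * c2 q 0 0"
  by (simp add: c2_mult)
lemma c2_mult_01: "c2 (p * q) 0 1 = c2 p 0 0 * c2 q 0 1 + c2 p 0 1 * c2 q 0 0"
  by (simp add: c2_mult)
lemma c2_mult_10': "c2 (p * q) (Suc 0) 0 = c2 p 0 0 * c2 q (Suc 0) 0 + c2 p (Suc 0) 0 * c2 q 0 0"
  by (simp add: c2_mult)
lemma c2_mult_01': "c2 (p * q) 0 (Suc 0) = c2 p 0 0 * c2 q 0 (Suc 0) + c2 p 0 (Suc 0) * c2 q 0 0"
  by (simp add: c2_mult)
lemma c2_power_00: "c2 (p ^ k) 0 0 = c2 p 0 0 ^ k"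
  by (induction k) (simp_all add: c2_mult_00 one_M c2_M)

lemma M_in_I_mult: "q \<in> I_n n \<Longrightarrow> M c i j * q \<in> I_n n" by (rule I_mult)

lemma G1M: "M 1 0 (2*n+3) \<in> I_n n"
  using I_G1[of n] by (simp add: var_y_M M_power)
lemma G2M: "M 1 n 2 - M 1 0 (n+2) \<in> I_n n"
  using I_G2[of n] by (simp add: var_y_M var_x_M M_power M_mult numeral_2_eq_2)
lemma G3M: "M 1 (2*n+1) 0 - M 1 1 (n+1) \<in> I_n n"
  using I_G3[of n] by (simp add: var_y_M var_x_M M_power M_mult)

lemma shift2: assumes "n \<le> i" "2 \<le> j" shows "cong_A n (M c i j) (M c (i-n) (j+n))"
proof -
  have e: "i - n + n = i" "j - 2 + 2 = j" "i - n + 0 = i - n" "j - 2 + (n+2) = j + n" using assms by auto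
  have "M c (i-n) (j-2) * (M 1 n 2 - M 1 0 (n+2)) = M c i j - M c (i-n) (j+n)" (is "?L = _")
    by (simp only: right_diff_distrib M_mult e mult_1_right)
  note eq = this
  have mem: "?L \<in> I_n n" by (rule I_mult[OF G2M])
  show ?thesis using mem unfolding eq cong_A_def .
qed

lemma shift3: assumes "2*n+1 \<le> i" shows "cong_A n (M c i j) (M c (i-2*n) (j+n+1))"
proof -
  have e: "i-(2*n+1) + (2*n+1) = i" "j + 0 = j" "i-(2*n+1) + 1 = i - 2*n" "j + (n+1) = j+n+1" using assms by auto
  have "M c (i-(2*n+1)) j * (M 1 (2*n+1) 0 - M 1 1 (n+1)) = M c i j - M c (i-2*n) (j+n+1)" (is "?L = _")
    by (simp only: right_diff_distrib M_mult e mult_1_right)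
  note eq = this
  have mem: "?L \<in> I_n n" by (rule I_mult[OF G3M])
  show ?thesis using mem unfolding eq cong_A_def .
qed

lemma cong_0_I: "cong_A n p 0 \<longleftrightarrow> p \<in> I_n n" by (simp add: cong_A_def)

lemma cong_I: "cong_A n p q \<Longrightarrow> q \<in> I_n n \<Longrightarrow> p \<in> I_n n"
  unfolding cong_A_def using I_add by fastforce

lemma Za: assumes "2*n+3 \<le> j" shows "M c i j \<in> I_n n"
proof -
  have e: "i + 0 = i" "j - (2*n+3) + (2*n+3) = j" using assms by auto
  have "M c i (j - (2*n+3)) * M 1 0 (2*n+3) = M c i j" (is "?L = _") by (simp only: M_mult e mult_1_right)
  note eq = this
  have mem: "?L \<in> I_n n" by (rule I_mult[OF G1M])
  show ?thesis using mem unfolding eq cong_A_def .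
qed

lemma Zb0: assumes "2 \<le> n" shows "M 1 1 (n+3) \<in> I_n n"
proof -
  have A: "cong_A n (M 1 (2*n+1) 2) (M 1 1 (n+3))"
  proof -
    have e: "0 + (2*n+1) = 2*n+1" "2 + 0 = (2::nat)" "0 + 1 = (1::nat)" "2 + (n+1) = n+3" by auto
    have "M 1 0 2 * (M 1 (2*n+1) 0 - M 1 1 (n+1)) = M 1 (2*n+1) 2 - M 1 1 (n+3)" (is "?L = _")
      by (simp only: right_diff_distrib M_mult e mult_1_right)
    note eq = this
    have mem: "?L \<in> I_n n" by (rule I_mult[OF G3M])
    show ?thesis using mem unfolding eq cong_A_def .
  qed
  have B: "cong_A n (M 1 (2*n+1) 2) (M 1 1 (2*n+2))"
  proof -
    have e: "n + 1 + n = 2*n+1" "0 + 2 = (2::nat)" "n+1+0 = n+1" "0 + (n+2) = n+2" "1 + n = n+1"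
       "1 + 0 = (1::nat)" "n + (n+2) = 2*n+2" by auto
    have "(M 1 (n+1) 0 + M 1 1 n) * (M 1 n 2 - M 1 0 (n+2)) = M 1 (2*n+1) 2 - M 1 1 (2*n+2)" (is "?L = _")
      by (simp only: distrib_right right_diff_distrib M_mult e mult_1_right) simp
    note eq = this
    have mem: "?L \<in> I_n n" by (rule I_mult[OF G2M])
    show ?thesis using mem unfolding eq cong_A_def .
  qed
  have C: "cong_A n (M 1 1 (n+3)) (M 1 1 (2*n+2))"
    using cong_trans[OF cong_sym[OF A] B] .
  have D: "cong_A n (M 1 1 (2*n+2)) (M 1 1 (3*n+1))"
  proof -
    have "cong_A n (M 1 1 (n+3) * M 1 0 (n-1)) (M 1 1 (2*n+2) * M 1 0 (n-1))"
      using cong_mult[OF C cong_refl] .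
    moreover have "n + 3 + (n - 1) = 2*n+2" "2*n+2 + (n-1) = 3*n+1" using assms by auto
    ultimately show ?thesis by (simp only: M_mult mult_1_right add_0_right)
  qed
  have E: "M 1 1 (3*n+1) \<in> I_n n" by (rule Za) (use assms in simp)
  have F: "cong_A n (M 1 1 (n+3)) (M 1 1 (3*n+1))" by (rule cong_trans[OF C D])
  show ?thesis by (rule cong_I[OF F E])
qed

lemma Zb: assumes "2 \<le> n" "1 \<le> i" "n+3 \<le> j" shows "M c i j \<in> I_n n"
proof -
  have e: "i - 1 + 1 = i" "j - (n+3) + (n+3) = j" using assms by auto
  have "M c (i-1) (j-(n+3)) * M 1 1 (n+3) = M c i j" (is "?L = _") by (simp only: M_mult e mult_1_right)
  note eq = this
  have mem: "?L \<in> I_n n" by (rule I_mult[OF Zb0[OF assms(1)]])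
  show ?thesis using mem unfolding eq cong_A_def .
qed


lemma Zcc: assumes "2 \<le> n" "n+1 \<le> i" "3 \<le> j" shows "M c i j \<in> I_n n"
  using cong_I[OF shift2[of n i j c]] Zb[of n "i-n" "j+n" c] assms by auto

definition Zc :: "nat \<Rightarrow> nat \<Rightarrow> nat \<Rightarrow> bool" where
  "Zc n i j \<longleftrightarrow> 2*n+3 \<le> j \<or> (1 \<le> i \<and> n+3 \<le> j) \<or> (n+1 \<le> i \<and> 3 \<le> j) \<or> 3*n+2 \<le> i + j"

lemma Zc_in_I: assumes "2 \<le> n" "Zc n i j" shows "M c i j \<in> I_n n"
proof -
  consider "2*n+3 \<le> j" | "1 \<le> i \<and> n+3 \<le> j" | "n+1 \<le> i \<and> 3 \<le> j" | "3*n+2 \<le> i + j \<and> j \<le> 2 \<and> n+1 \<le> i"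
     | "3*n+2 \<le> i + j \<and> i = 0" | "3*n+2 \<le> i + j \<and> i \<le> n \<and> j \<le> n + 2 "
    using assms(2) unfolding Zc_def by linarith
  then show ?thesis
  proof cases
    case 1 then show ?thesis by (rule Za)
  next
    case 2 then show ?thesis using Zb assms(1) by blast
  next
    case 3 then show ?thesis using Zcc assms(1) by blast
  next
    case 4
    then consider "j = 2" | "j \<le> 1" by linarith
    then show ?thesis
    proof cases
      case 1
      then have "cong_A n (M c i j) (M c (i-n) (j+n))" using 4 by (intro shift2) auto
      moreover have "M c (i-n) (j+n) \<in> I_n n" using 4 1 assms(1) by (intro Zcc) auto
      ultimately show ?thesis by (rule cong_I)
    next
      case 2
      then have "cong_A n (M c i j) (M c (i-2*n) (j+n+1))" using 4 by (intro shift3) auto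
      moreover have "M c (i-2*n) (j+n+1) \<in> I_n n" using 4 2 assms(1) by (intro Zcc) auto
      ultimately show ?thesis by (rule cong_I)
    qed
  next
    case 5 then show ?thesis using Za[where n=n and j=j and c=c and i=i] assms(1) by auto
  next
    case 6 then show ?thesis using assms(1) by linarith
  qed
qed

lemma poly2_expand: "p = (\<Sum>j\<le>degree p. \<Sum>i\<le>degree (coeff p j). M (c2 p i j) i j)"
proof -
  have "p = (\<Sum>j\<le>degree p. monom (coeff p j) j)" by (simp add: poly_as_sum_of_monoms)
  also have "\<dots> = (\<Sum>j\<le>degree p. monom (\<Sum>i\<le>degree (coeff p j). monom (coeff (coeff p j) i) i) j)"
    by (simp add: poly_as_sum_of_monoms)
  also have "\<dots> = (\<Sum>j\<le>degree p. \<Sum>i\<le>degree (coeff p j). M (c2 p i j) i j)"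
    by (simp add: monom_sum M_def c2_def)
  finally show ?thesis .
qed

lemma supp_in_I:
  assumes "2 \<le> n" "\<And>i j. c2 p i j \<noteq> 0 \<Longrightarrow> Zc n i j"
  shows "p \<in> I_n n"
proof -
  have "(\<Sum>j\<le>degree p. \<Sum>i\<le>degree (coeff p j). M (c2 p i j) i j) \<in> I_n n"
  proof (intro I_sum)
    fix j i
    show "M (c2 p i j) i j \<in> I_n n"
    proof (cases "c2 p i j = 0")
      case True then show ?thesis by (simp add: M_def I_0)
    next
      case False then show ?thesis using Zc_in_I[OF assms(1) assms(2)] by blast
    qed
  qed
  then show ?thesis using poly2_expand[of p] by simp
qed


locale autA =
  fixes n :: nat and \<phi> :: "'a::field poly poly \<Rightarrow> 'a poly poly"
  assumes n2: "n \<ge> 2"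
    and chr: "CHAR('a) = 0 \<or> (coprime (CHAR('a)) n \<and> coprime (CHAR('a)) (n - 1))"
    and aut: "is_aut_A n \<phi>"
begin

lemma phi_cong: "cong_A n p q \<Longrightarrow> cong_A n (\<phi> p) (\<phi> q)"
  using aut unfolding is_aut_A_def by blast
lemma phi_add: "cong_A n (\<phi> (p + q)) (\<phi> p + \<phi> q)"
  using aut unfolding is_aut_A_def by blast
lemma phi_mult: "cong_A n (\<phi> (p * q)) (\<phi> p * \<phi> q)"
  using aut unfolding is_aut_A_def by blast
lemma phi_smul: "cong_A n (\<phi> (const2 c * p)) (const2 c * \<phi> p)"
  using aut unfolding is_aut_A_def by blast
lemma phi_one: "cong_A n (\<phi> 1) 1"
  using aut unfolding is_aut_A_def by blast
lemma phi_surj: "\<exists>p. cong_A n (\<phi> p) q"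
  using aut unfolding is_aut_A_def by blast

lemma phi_zero: "cong_A n (\<phi> 0) 0"
proof -
  have "cong_A n (\<phi> 0) (\<phi> 0 + \<phi> 0)" using phi_add[of 0 0] by simp
  then show ?thesis unfolding cong_A_def
    by (metis I_uminus add_diff_cancel_left' diff_0_right minus_diff_eq)
qed

lemma phi_power: "cong_A n (\<phi> (p ^ k)) (\<phi> p ^ k)"
proof (induction k)
  case 0 then show ?case using phi_one by simp
next
  case (Suc k)
  have "cong_A n (\<phi> (p * p ^ k)) (\<phi> p * \<phi> (p ^ k))" by (rule phi_mult)
  moreover have "cong_A n (\<phi> p * \<phi> (p ^ k)) (\<phi> p * \<phi> p ^ k)" using Suc by (intro cong_multL)
  ultimately show ?case by (simp add: cong_trans)
qed

lemma phi_const: "cong_A n (\<phi> (const2 c)) (const2 c)"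
proof -
  have "cong_A n (\<phi> (const2 c * 1)) (const2 c * \<phi> 1)" by (rule phi_smul)
  moreover have "cong_A n (const2 c * \<phi> 1) (const2 c * 1)" using phi_one by (rule cong_multL)
  ultimately show ?thesis by (simp add: cong_trans)
qed

lemma phi_mult_cong: "cong_A n (\<phi> p) a \<Longrightarrow> cong_A n (\<phi> q) b \<Longrightarrow> cong_A n (\<phi> (p * q)) (a * b)"
  using phi_mult cong_mult cong_trans by blast
lemma phi_add_cong: "cong_A n (\<phi> p) a \<Longrightarrow> cong_A n (\<phi> q) b \<Longrightarrow> cong_A n (\<phi> (p + q)) (a + b)"
  using phi_add cong_add cong_trans by blast

definition f where "f = \<phi> var_x"
definition g where "g = \<phi> var_y"

lemma closed_single: "(i,j) \<in> {(0,0),(1,0),(0,1)} \<Longrightarrow> closedS n {(i,j)}"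
  using n2 unfolding closedS_def by auto

lemma c2_cong_single: "(i,j) \<in> {(0,0),(1,0),(0,1)} \<Longrightarrow> cong_A n p q \<Longrightarrow> c2 p i j = c2 q i j"
  using ell_cong[OF closed_single] ell_single by metis

lemma f00: "c2 f 0 0 = 0"
proof -
  have ex: "var_x ^ (3*n+2) = M 1 (3*n+2) 0" by (simp only: var_x_M M_power power_one mult_1 mult_0)
  have "var_x ^ (3*n+2) \<in> I_n n" unfolding ex by (rule Zc_in_I[OF n2]) (simp add: Zc_def)
  then have "cong_A n (var_x ^ (3*n+2)) 0" by (simp add: cong_A_def)
  then have "cong_A n (\<phi> (var_x ^ (3*n+2))) 0" using phi_cong phi_zero cong_trans by blast
  then have "cong_A n (f ^ (3*n+2)) 0" using phi_power cong_trans cong_sym unfolding f_def by blast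
  then have "c2 (f ^ (3*n+2)) 0 0 = 0" using c2_cong_single[of 0 0] by fastforce
  then have "c2 f 0 0 ^ (3*n+2) = 0" by (simp only: c2_power_00)
  then show ?thesis by auto
qed

lemma g00: "c2 g 0 0 = 0"
proof -
  have "cong_A n (var_y ^ (2*n+3)) 0" using I_G1 by (simp add: cong_A_def)
  then have "cong_A n (\<phi> (var_y ^ (2*n+3))) 0" using phi_cong phi_zero cong_trans by blast
  then have "cong_A n (g ^ (2*n+3)) 0" using phi_power cong_trans cong_sym unfolding g_def by blast
  then have "c2 (g ^ (2*n+3)) 0 0 = 0" using c2_cong_single[of 0 0] by fastforce
  then have "c2 g 0 0 ^ (2*n+3) = 0" by (simp only: c2_power_00)
  then show ?thesis by auto
qed

definition lin3 where "lin3 r a b c \<longleftrightarrow> c2 r 0 0 = a \<and> c2 r 1 0 = b \<and> c2 r 0 1 = c"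

lemma lin3_cong: "cong_A n r r' \<Longrightarrow> lin3 r' a b c \<Longrightarrow> lin3 r a b c"
  unfolding lin3_def using c2_cong_single by auto

lemma const_pCons: "[:pCons c q:] = const2 c + var_x * [:q:]"
  by (simp add: const2_def var_x_def)
lemma pCons_var_y: "pCons q p = [:q:] + var_y * p"
  by (simp add: var_y_def)

lemma lin_eval_const: "lin3 (\<phi> [:q:]) (coeff q 0) (c2 f 1 0 * coeff q 1) (c2 f 0 1 * coeff q 1)"
proof (induction q)
  case 0
  then show ?case using lin3_cong[OF phi_zero] by (simp add: lin3_def)
next
  case (pCons c q)
  have "cong_A n (\<phi> [:pCons c q:]) (const2 c + f * \<phi> [:q:])"
    unfolding const_pCons f_def
    by (intro phi_add_cong phi_const phi_mult_cong cong_refl)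
  moreover have "lin3 (const2 c + f * \<phi> [:q:]) (coeff (pCons c q) 0) (c2 f 1 0 * coeff (pCons c q) 1) (c2 f 0 1 * coeff (pCons c q) 1)"
    using pCons.IH f00 unfolding lin3_def
    by (simp add: c2_mult_00 c2_mult_10' c2_mult_01' const2_M c2_M)
  ultimately show ?case by (rule lin3_cong)
qed

lemma c2_pCons0: "c2 (pCons q p) i 0 = coeff q i" by (simp add: c2_def)
lemma c2_pConsS: "c2 (pCons q p) i (Suc j) = c2 p i j" by (simp add: c2_def)

lemma lin_eval: "lin3 (\<phi> p) (c2 p 0 0) (c2 f 1 0 * c2 p 1 0 + c2 g 1 0 * c2 p 0 1) (c2 f 0 1 * c2 p 1 0 + c2 g 0 1 * c2 p 0 1)"
proof (induction p)
  case 0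
  then show ?case using lin3_cong[OF phi_zero] by (simp add: lin3_def)
next
  case (pCons q p)
  have "cong_A n (\<phi> (pCons q p)) (\<phi> [:q:] + g * \<phi> p)"
    unfolding pCons_var_y[of q p] g_def
    by (intro phi_add_cong phi_mult_cong cong_refl)
  moreover
  have i1: "c2 (\<phi> p) 0 0 = c2 p 0 0" using pCons.IH unfolding lin3_def by blast
  have i2: "c2 (\<phi> [:q:]) 0 0 = coeff q 0" "c2 (\<phi> [:q:]) 1 0 = c2 f 1 0 * coeff q 1"
     "c2 (\<phi> [:q:]) 0 1 = c2 f 0 1 * coeff q 1"
    using lin_eval_const[of q] unfolding lin3_def by auto
  have e: "c2 (pCons q p) 0 0 = coeff q 0" "c2 (pCons q p) 1 0 = coeff q 1" "c2 (pCons q p) 0 1 = c2 p 0 0"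
    by (simp_all add: c2_def)
  have "lin3 (\<phi> [:q:] + g * \<phi> p) (coeff q 0) (c2 f 1 0 * coeff q 1 + c2 g 1 0 * c2 p 0 0) (c2 f 0 1 * coeff q 1 + c2 g 0 1 * c2 p 0 0)"
    unfolding lin3_def c2_add c2_mult_00 c2_mult_10 c2_mult_01 i1 i2 g00 by simp
  ultimately show ?case unfolding e by (rule lin3_cong)
qed

lemma det_ne: "c2 f 1 0 * c2 g 0 1 - c2 g 1 0 * c2 f 0 1 \<noteq> 0"
proof -
  obtain p where p: "cong_A n (\<phi> p) var_x" using phi_surj by blast
  obtain q where q: "cong_A n (\<phi> q) var_y" using phi_surj by blast
  have lx: "lin3 var_x 0 1 0" by (simp add: lin3_def var_x_M c2_M)
  have ly: "lin3 var_y 0 0 1" by (simp add: lin3_def var_y_M c2_M)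
  have A: "c2 f 1 0 * c2 p 1 0 + c2 g 1 0 * c2 p 0 1 = 1" "c2 f 0 1 * c2 p 1 0 + c2 g 0 1 * c2 p 0 1 = 0"
    using lin_eval[of p] lin3_cong[OF p lx] unfolding lin3_def by auto
  have B: "c2 f 1 0 * c2 q 1 0 + c2 g 1 0 * c2 q 0 1 = 0" "c2 f 0 1 * c2 q 1 0 + c2 g 0 1 * c2 q 0 1 = 1"
    using lin_eval[of q] lin3_cong[OF q ly] unfolding lin3_def by auto
  show ?thesis
  proof
    assume h: "c2 f 1 0 * c2 g 0 1 - c2 g 1 0 * c2 f 0 1 = 0"
    have "(c2 f 1 0 * c2 g 0 1 - c2 g 1 0 * c2 f 0 1) * (c2 p 1 0 * c2 q 0 1 - c2 p 0 1 * c2 q 1 0) = 1"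
      using A B by algebra
    then show False using h by simp
  qed
qed

end


abbreviation D where "D \<equiv> Dw 1 1"
definition eqD :: "nat \<Rightarrow> 'a::comm_ring_1 poly poly \<Rightarrow> 'a poly poly \<Rightarrow> bool" where
  "eqD k p q \<longleftrightarrow> D k (p - q)"

lemma eqD_c2: "eqD k p q \<Longrightarrow> i + j < k \<Longrightarrow> c2 p i j = c2 q i j"
  unfolding eqD_def Dw_def by auto

lemma eqD_refl[simp]: "eqD k p p" by (simp add: eqD_def)
lemma eqD_trans: "eqD k p q \<Longrightarrow> eqD k q r \<Longrightarrow> eqD k p r"
  unfolding eqD_def using Dw_add by fastforce
lemma eqD_sym: "eqD k p q \<Longrightarrow> eqD k q p"
  unfolding eqD_def using Dw_uminus by fastforce
lemma eqD_mono: "eqD k p q \<Longrightarrow> k' \<le> k \<Longrightarrow> eqD k' p q"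
  unfolding eqD_def using Dw_mono by blast
lemma eqD_add: "eqD k p q \<Longrightarrow> eqD k p' q' \<Longrightarrow> eqD k (p + p') (q + q')"
  unfolding eqD_def using Dw_add by (fastforce simp: algebra_simps)
lemma eqD_D: "eqD k p q \<Longrightarrow> D k q \<Longrightarrow> D k p"
  unfolding eqD_def using Dw_add by fastforce
lemma eqD_rem: "D k r \<Longrightarrow> eqD k (p + r) p"
  unfolding eqD_def by simp

lemma eqD_mult:
  assumes "eqD (a+1) p p'" "D a p'" "eqD (b+1) q q'" "D b q'"
  shows "eqD (a+b+1) (p*q) (p'*q')"
proof -
  have "D b (q - q')" using Dw_mono[of 1 1 "b+1" "q - q'" b] assms(3) unfolding eqD_def by simp
  then have q: "D b q" using Dw_add[OF _ assms(4)] by fastforce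
  have "p*q - p'*q' = (p - p') * q + p' * (q - q')" by (simp add: algebra_simps)
  moreover have "D (a+b+1) ((p - p') * q)" using Dw_mult[OF _ q, of "a+1"] assms(1) unfolding eqD_def
    by (simp add: add.commute add.left_commute)
  moreover have "D (a+b+1) (p' * (q - q'))" using Dw_mult[OF assms(2), of "b+1"] assms(3) unfolding eqD_def
    by (simp add: add.assoc)
  ultimately show ?thesis unfolding eqD_def by (simp add: Dw_add)
qed

lemma eqD_power:
  assumes "eqD (a+1) p p'" "D a p'"
  shows "eqD (m*a+1) (p^m) (p'^m)"
proof (induction m)
  case 0 then show ?case by simp
next
  case (Suc m)
  have "eqD (a + m*a + 1) (p * p^m) (p' * p'^m)"
    by (rule eqD_mult[OF assms Suc Dw_power[OF assms(2)]])
  then show ?case by (simp add: add.assoc)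
qed

lemma expand_pow:
  assumes u: "D 1 u" and v: "D 2 v"
  shows "eqD (m+2) ((u+v)^m) (u^m + of_nat m * (u^(m-1) * v))"
proof (induction m)
  case 0 then show ?case by simp
next
  case (Suc m)
  define E where "E = (u+v)^m - (u^m + of_nat m * (u^(m-1) * v))"
  have E: "D (m+2) E" using Suc unfolding eqD_def E_def .
  have "(u+v)^(Suc m) - (u^(Suc m) + of_nat (Suc m) * (u^m * v))
     = u * E + v * E + of_nat m * (u^(m-1) * v * v)"
  proof (cases m)
    case 0 then show ?thesis by (simp add: E_def algebra_simps)
  next
    case (Suc k)
    then show ?thesis unfolding E_def by (simp add: algebra_simps)
  qed
  moreover have "D (Suc m + 2) (u * E)" using Dw_mult[OF u E] by simp
  moreover have "D (Suc m + 2) (v * E)" using Dw_mult[OF v E] Dw_mono by fastforce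
  moreover have "D (Suc m + 2) (of_nat m * (u^(m-1) * v * v))"
  proof (cases m)
    case 0 then show ?thesis by simp
  next
    case (Suc k)
    have "D (k*1 + 2 + 2) (u^k * v * v)" using Dw_mult[OF Dw_mult[OF Dw_power[OF u] v] v] by simp
    then have "D (Suc m + 2) (u^(m-1) * v * v)" using Suc by simp
    then show ?thesis by (rule Dw_multL)
  qed
  ultimately show ?case unfolding eqD_def by (simp add: Dw_add)
qed

lemma eqD_mult2:
  assumes "eqD (a+2) P (P0 + P1)" "D a P0" "D (a+1) P1"
      and "eqD (b+2) Q (Q0 + Q1)" "D b Q0" "D (b+1) Q1"
  shows "eqD (a+b+2) (P*Q) (P0*Q0 + (P0*Q1 + P1*Q0))"
proof -
  have "D b (Q - (Q0 + Q1))" using Dw_mono[of 1 1 "b+2" _ b] assms(4) unfolding eqD_def by simp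
  moreover have "D b Q1" using Dw_mono[OF assms(6)] by simp
  ultimately have Q: "D b Q" using Dw_add[OF _ Dw_add[OF assms(5)]] by fastforce
  have P0: "D a (P0 + P1)" using Dw_add[OF assms(2) Dw_mono[OF assms(3)]] by simp
  define EP where "EP = P - (P0 + P1)"
  define EQ where "EQ = Q - (Q0 + Q1)"
  have EP: "D (a+2) EP" using assms(1) unfolding eqD_def EP_def .
  have EQ: "D (b+2) EQ" using assms(4) unfolding eqD_def EQ_def .
  have "P*Q - (P0*Q0 + (P0*Q1 + P1*Q0)) = EP * Q + (P0 + P1) * EQ + P1 * Q1"
    unfolding EP_def EQ_def by (simp add: algebra_simps)
  moreover have "D (a+b+2) (EP * Q)" using Dw_mult[OF EP Q] by (simp add: add.commute add.left_commute)
  moreover have "D (a+b+2) ((P0 + P1) * EQ)" using Dw_mult[OF P0 EQ] by (simp add: add.assoc)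
  moreover have "D (a+b+2) (P1 * Q1)" using Dw_mult[OF assms(3) assms(6)] by simp
  ultimately show ?thesis unfolding eqD_def by (simp add: Dw_add)
qed

lemma D_lin: assumes "c2 p 0 0 = 0"
  shows "eqD 2 p (M (c2 p 1 0) 1 0 + M (c2 p 0 1) 0 1)"
  unfolding eqD_def Dw_def
proof (intro allI impI)
  fix i j :: nat assume "1*i + 1*j < 2"
  then have "(i,j) = (0,0) \<or> (i,j) = (1,0) \<or> (i,j) = (0,1)" by auto
  then show "c2 (p - (M (c2 p 1 0) 1 0 + M (c2 p 0 1) 0 1)) i j = 0"
    using assms by (auto simp: c2_M)
qed

lemma D1_of: "c2 p 0 0 = 0 \<Longrightarrow> D 1 p"
  unfolding Dw_def by auto

lemma of_nat_M: "(of_nat m :: 'a::comm_ring_1 poly poly) = M (of_nat m) 0 0"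
  by (simp add: M_def of_nat_poly monom_0)

lemma c2_mult_M_right: "c2 (p * M c i j) i' j' = (if i \<le> i' \<and> j \<le> j' then c * c2 p (i'-i) (j'-j) else 0)"
  by (simp add: mult.commute[of p] c2_M_mult)

lemma y0_c2: "c2 p i 0 = coeff (coeff p 0) i" by (simp add: c2_def)


lemma M_zero[simp]: "M 0 i j = 0" by (simp add: M_def)
lemma numeral_M: "(numeral k :: 'a::comm_ring_1 poly poly) = M (numeral k) 0 0"
  by (metis of_nat_M of_nat_numeral)
lemma coeff_M_0: "coeff (M a i j) 0 = (if j = 0 then monom a i else 0)"
  by (simp add: M_def coeff_monom)
lemma Dw_M': "w1*i + w2*j \<ge> k \<Longrightarrow> Dw w1 w2 k (M c i j)"
  using Dw_M Dw_mono by blast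

lemma y0_lin: "c2 ((M a 1 0 + M b 0 1) * (M c 1 0 + M d 0 1) ^ k) (k+1) 0 = a * c ^ k"
  unfolding y0_c2 coeff_mult_0 coeff_0_power by (simp add: coeff_M_0 monom_power mult_monom coeff_monom)
lemma y0_lin2: "c2 ((M a 1 0 + M b 0 1) ^ k * (M c 1 0 + M d 0 1) ^ 2) (k+2) 0 = a ^ k * c ^ 2"
  unfolding y0_c2 coeff_mult_0 coeff_0_power by (simp add: coeff_M_0 monom_power mult_monom coeff_monom)
lemma y0_lin3: "c2 ((M c 1 0 + M d 0 1) ^ k) k 0 = c ^ k"
  unfolding y0_c2 coeff_mult_0 coeff_0_power by (simp add: coeff_M_0 monom_power mult_monom coeff_monom)

context autA begin

lemma F3: "cong_A n (f ^ (2*n+1)) (f * g ^ (n+1))"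
proof -
  have "cong_A n (var_x ^ (2*n+1)) (var_x * var_y ^ (n+1))" using I_G3 by (simp add: cong_A_def)
  then have "cong_A n (\<phi> (var_x ^ (2*n+1))) (\<phi> (var_x * var_y ^ (n+1)))" by (rule phi_cong)
  moreover have "cong_A n (\<phi> (var_x ^ (2*n+1))) (f ^ (2*n+1))" unfolding f_def by (rule phi_power)
  moreover have "cong_A n (\<phi> (var_x * var_y ^ (n+1))) (f * g ^ (n+1))"
    unfolding f_def g_def by (intro phi_mult_cong cong_refl phi_power)
  ultimately show ?thesis by (meson cong_sym cong_trans)
qed

lemma F2: "cong_A n (f ^ n * g ^ 2) (g ^ (n+2))"
proof -
  have "cong_A n (var_x ^ n * var_y ^ 2) (var_y ^ (n+2))" using I_G2 by (simp add: cong_A_def)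
  then have "cong_A n (\<phi> (var_x ^ n * var_y ^ 2)) (\<phi> (var_y ^ (n+2)))" by (rule phi_cong)
  moreover have "cong_A n (\<phi> (var_y ^ (n+2))) (g ^ (n+2))" unfolding g_def by (rule phi_power)
  moreover have "cong_A n (\<phi> (var_x ^ n * var_y ^ 2)) (f ^ n * g ^ 2)"
    unfolding f_def g_def by (intro phi_mult_cong cong_refl phi_power)
  ultimately show ?thesis by (meson cong_sym cong_trans)
qed

lemma Fy: "cong_A n (\<phi> (var_y ^ (2*n+1))) (g ^ (2*n+1))"
  unfolding g_def by (rule phi_power)

lemma f_D1: "D 1 f" using f00 by (rule D1_of)
lemma g_D1: "D 1 g" using g00 by (rule D1_of)

abbreviation "Lf \<equiv> M (c2 f 1 0) 1 0 + M (c2 f 0 1) 0 1"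
abbreviation "Lg \<equiv> M (c2 g 1 0) 1 0 + M (c2 g 0 1) 0 1"

lemma Lf_eq: "eqD 2 f Lf" using f00 by (rule D_lin)
lemma Lg_eq: "eqD 2 g Lg" using g00 by (rule D_lin)
lemma Lf_D: "D 1 Lf" by (intro Dw_add Dw_M') auto
lemma Lg_D: "D 1 Lg" by (intro Dw_add Dw_M') auto

lemma Lf_pow_D: "D m (Lf ^ m)" using Dw_power[OF Lf_D, of m] by simp
lemma Lg_pow_D: "D m (Lg ^ m)" using Dw_power[OF Lg_D, of m] by simp

lemma fpow_L: "eqD (m+1) (f ^ m) (Lf ^ m)"
  using eqD_power[OF Lf_eq[folded one_add_one] Lf_D, of m] by simp
lemma gpow_L: "eqD (m+1) (g ^ m) (Lg ^ m)"
  using eqD_power[OF Lg_eq[folded one_add_one] Lg_D, of m] by simp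

lemma F3_L: "eqD (n+3) (f * g ^ (n+1)) (Lf * Lg ^ (n+1))"
proof -
  have "eqD (1 + (n+1) + 1) (f * g ^ (n+1)) (Lf * Lg ^ (n+1))"
    by (rule eqD_mult[OF Lf_eq[folded one_add_one] Lf_D gpow_L]) (rule Lg_pow_D)
  moreover have e: "1 + (n+1) + 1 = n + 3" by simp
  ultimately show ?thesis by (simp only: e)
qed

lemma F2_L: "eqD (n+3) (f ^ n * g ^ 2) (Lf ^ n * Lg ^ 2)"
proof -
  have "eqD (n + 2 + 1) (f ^ n * g ^ 2) (Lf ^ n * Lg ^ 2)"
    by (rule eqD_mult[OF fpow_L _ gpow_L]) (rule Lf_pow_D, rule Lg_pow_D)
  moreover have e: "n + 2 + 1 = n + 3" by simp
  ultimately show ?thesis by (simp only: e)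
qed

lemma fpow_D: "D m (f ^ m)" using Dw_power[OF f_D1, of m] by simp

lemma c2_D: "D k p \<Longrightarrow> i + j < k \<Longrightarrow> c2 p i j = 0" by (simp add: Dw_def)

lemma c_zero: "c2 g 1 0 = 0"
proof -
  let ?a = "c2 f 1 0" and ?c = "c2 g 1 0"
  have cl: "closedS n {(n+2, 0)}" using n2 unfolding closedS_def by auto
  have e1: "c2 (f * g ^ (n+1)) (n+2) 0 = ?a * ?c ^ (n+1)"
  proof -
    have "c2 (f * g ^ (n+1)) (n+2) 0 = c2 (Lf * Lg ^ (n+1)) (n+2) 0"
      by (rule eqD_c2[OF F3_L]) simp
    also have "\<dots> = ?a * ?c ^ (n+1)" using y0_lin[of ?a _ ?c _ "n+1"] by (simp add: add.assoc)
    finally show ?thesis .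
  qed
  have e2: "c2 (f ^ (2*n+1)) (n+2) 0 = 0" using n2 by (intro c2_D[OF fpow_D]) simp
  have E1: "?a * ?c ^ (n+1) = 0"
    using ell_cong[OF cl F3] e1 e2 by (simp add: ell_single)
  have e3: "c2 (f ^ n * g ^ 2) (n+2) 0 = ?a ^ n * ?c ^ 2"
  proof -
    have "c2 (f ^ n * g ^ 2) (n+2) 0 = c2 (Lf ^ n * Lg ^ 2) (n+2) 0"
      by (rule eqD_c2[OF F2_L]) simp
    also have "\<dots> = ?a ^ n * ?c ^ 2" by (rule y0_lin2)
    finally show ?thesis .
  qed
  have e4: "c2 (g ^ (n+2)) (n+2) 0 = ?c ^ (n+2)"
  proof -
    have "c2 (g ^ (n+2)) (n+2) 0 = c2 (Lg ^ (n+2)) (n+2) 0"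
      by (rule eqD_c2[OF gpow_L]) simp
    also have "\<dots> = ?c ^ (n+2)" by (rule y0_lin3)
    finally show ?thesis .
  qed
  have E2: "?a ^ n * ?c ^ 2 = ?c ^ (n+2)"
    using ell_cong[OF cl F2] e3 e4 by (simp add: ell_single)
  show ?thesis
  proof (rule ccontr)
    assume h: "?c \<noteq> 0"
    then have "?a = 0" using E1 by simp
    then have "?a ^ n = 0" using n2 by (simp add: power_0_left)
    then have "?c ^ (n+2) = 0" using E2 by (metis mult_zero_left)
    then show False using h by simp
  qed
qed

end


context autA begin

lemma d_ne_a_ne: "c2 f 1 0 \<noteq> 0 \<and> c2 g 0 1 \<noteq> 0 \<and> c2 f 1 0 * c2 g 0 1 \<noteq> 0"
  using det_ne c_zero by auto

lemma Lg_c: "Lg = M (c2 g 0 1) 0 1" using c_zero by simp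

lemma fpow_c2_0: "i + j < m \<Longrightarrow> c2 (f ^ m) i j = 0"
  by (rule c2_D[OF fpow_D])

lemma b_zero: "c2 f 0 1 = 0"
proof -
  let ?a = "c2 f 1 0" and ?b = "c2 f 0 1" and ?d = "c2 g 0 1"
  have cl: "closedS n {(n,2),(0,n+2)}" using n2 unfolding closedS_def by auto
  have ne: "(n,2) \<noteq> (0,n+2)" using n2 by auto
  have z1: "c2 (f ^ (2*n+1)) n 2 = 0" "c2 (f ^ (2*n+1)) 0 (n+2) = 0"
    by (rule fpow_c2_0, use n2 in simp)+
  have e1: "ell {(n,2),(0,n+2)} (f ^ (2*n+1)) = 0"
    unfolding ell_two[OF ne] z1 by simp
  have q1: "c2 (f * g ^ (n+1)) n 2 = c2 (Lf * Lg ^ (n+1)) n 2" by (rule eqD_c2[OF F3_L]) simp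
  have q2: "c2 (f * g ^ (n+1)) 0 (n+2) = c2 (Lf * Lg ^ (n+1)) 0 (n+2)" by (rule eqD_c2[OF F3_L]) simp
  have e2: "ell {(n,2),(0,n+2)} (f * g ^ (n+1)) = ?b * ?d ^ (n+1)"
    unfolding ell_two[OF ne] q1 q2 unfolding Lg_c M_power using n2
    by (simp add: distrib_right c2_mult_M_right c2_M)
  have "?b * ?d ^ (n+1) = 0" using ell_cong[OF cl F3] e1 e2 by simp
  then show ?thesis using d_ne_a_ne by simp
qed

lemma Lf_c: "Lf = M (c2 f 1 0) 1 0" using b_zero by simp

lemma E4: "c2 f 1 0 ^ n * c2 g 0 1 ^ 2 = c2 g 0 1 ^ (n+2)"
proof -
  let ?a = "c2 f 1 0" and ?d = "c2 g 0 1"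
  have cl: "closedS n {(n,2),(0,n+2)}" using n2 unfolding closedS_def by auto
  have ne: "(n,2) \<noteq> (0,n+2)" using n2 by auto
  have q1: "c2 (f ^ n * g ^ 2) n 2 = c2 (Lf ^ n * Lg ^ 2) n 2" by (rule eqD_c2[OF F2_L]) simp
  have q2: "c2 (f ^ n * g ^ 2) 0 (n+2) = c2 (Lf ^ n * Lg ^ 2) 0 (n+2)" by (rule eqD_c2[OF F2_L]) simp
  have e1: "ell {(n,2),(0,n+2)} (f ^ n * g ^ 2) = ?a ^ n * ?d ^ 2"
    unfolding ell_two[OF ne] q1 q2 unfolding Lg_c Lf_c M_power M_mult using n2 by (simp add: c2_M)
  have q3: "c2 (g ^ (n+2)) n 2 = c2 (Lg ^ (n+2)) n 2" by (rule eqD_c2[OF gpow_L]) simp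
  have q4: "c2 (g ^ (n+2)) 0 (n+2) = c2 (Lg ^ (n+2)) 0 (n+2)" by (rule eqD_c2[OF gpow_L]) simp
  have e2: "ell {(n,2),(0,n+2)} (g ^ (n+2)) = ?d ^ (n+2)"
    unfolding ell_two[OF ne] q3 q4 unfolding Lg_c M_power using n2 by (simp add: c2_M)
  show ?thesis using ell_cong[OF cl F2] e1 e2 by simp
qed

lemma f_Dw13: "Dw 1 3 1 f" using f00 unfolding Dw_def by auto
lemma g_Dw13: "Dw 1 3 2 g"
  unfolding Dw_def
proof (intro allI impI)
  fix i j :: nat assume "1 * i + 3 * j < 2"
  then have "(i = 0 \<and> j = 0) \<or> (i = 1 \<and> j = 0)" by arith
  then show "c2 g i j = 0" using g00 c_zero by auto
qed

lemma E5: "c2 f 1 0 ^ (2*n+1) = c2 f 1 0 * c2 g 0 1 ^ (n+1)"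
proof -
  let ?a = "c2 f 1 0" and ?d = "c2 g 0 1"
  have cl: "closedS n {(1,n+1),(2*n+1,0)}" using n2 unfolding closedS_def by auto
  have ne: "(1,n+1) \<noteq> (2*n+1,0)" by auto
  have q1: "c2 (f ^ (2*n+1)) 1 (n+1) = c2 (Lf ^ (2*n+1)) 1 (n+1)" by (rule eqD_c2[OF fpow_L]) (use n2 in simp)
  have q2: "c2 (f ^ (2*n+1)) (2*n+1) 0 = c2 (Lf ^ (2*n+1)) (2*n+1) 0" by (rule eqD_c2[OF fpow_L]) simp
  have e1: "ell {(1,n+1),(2*n+1,0)} (f ^ (2*n+1)) = ?a ^ (2*n+1)"
    unfolding ell_two[OF ne] q1 q2 unfolding Lf_c M_power by (simp add: c2_M)
  have z: "c2 (f * g ^ (n+1)) (2*n+1) 0 = 0"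
  proof -
    have "Dw 1 3 (1 + (n+1)*2) (f * g ^ (n+1))" by (intro Dw_mult f_Dw13 Dw_power g_Dw13)
    then show ?thesis unfolding Dw_def by simp
  qed
  have q3: "c2 (f * g ^ (n+1)) 1 (n+1) = c2 (Lf * Lg ^ (n+1)) 1 (n+1)" by (rule eqD_c2[OF F3_L]) simp
  have e2: "ell {(1,n+1),(2*n+1,0)} (f * g ^ (n+1)) = ?a * ?d ^ (n+1)"
    unfolding ell_two[OF ne] z q3 unfolding Lg_c Lf_c M_power M_mult by (simp add: c2_M)
  show ?thesis using ell_cong[OF cl F3] e1 e2 by simp
qed

end


lemma D_P1: assumes "D 1 u" "D 2 v" "1 \<le> m" shows "D (m+1) (of_nat m * (u^(m-1) * v))"
proof -
  have "D ((m-1)*1 + 2) (u^(m-1) * v)" by (intro Dw_mult Dw_power assms)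
  then have "D (m+1) (u^(m-1) * v)" using assms(3) by simp
  then show ?thesis by (rule Dw_multL)
qed

context autA begin

lemma char_ne: assumes "k dvd n * (n - 1)" "k > 0" shows "(of_nat k :: 'a) \<noteq> 0"
proof
  assume h: "(of_nat k :: 'a) = 0"
  then have dv: "CHAR('a) dvd k" by (simp add: of_nat_eq_0_iff_char_dvd)
  show False
  proof (cases "CHAR('a) = 0")
    case True then show False using dv assms(2) by simp
  next
    case False
    then have "coprime (CHAR('a)) (n * (n - 1))" using chr by simp
    moreover have "CHAR('a) dvd n * (n - 1)" using dv assms(1) dvd_trans by blast
    ultimately have "CHAR('a) = 1" using coprime_common_divisor_nat[of "CHAR('a)" "n*(n-1)" "CHAR('a)"] by simp
    then show False by simp
  qed
qed

lemma n_ne: "(of_nat n :: 'a) \<noteq> 0" using n2 by (intro char_ne) auto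
lemma n1_ne: "(of_nat (n-1) :: 'a) \<noteq> 0" using n2 by (intro char_ne) auto
lemma two_ne: "(2 :: 'a) \<noteq> 0"
proof -
  have "(2::nat) dvd n * (n - 1)"
  proof (cases "even n")
    case True then show ?thesis by simp
  next
    case False then have "even (n - 1)" using n2 by simp
    then show ?thesis by simp
  qed
  then have "(of_nat 2 :: 'a) \<noteq> 0" by (intro char_ne) auto
  then show ?thesis by simp
qed

definition vf where "vf = f - M (c2 f 1 0) 1 0"
definition vg where "vg = g - M (c2 g 0 1) 0 1"

lemma vf_D: "D 2 vf" using Lf_eq unfolding Lf_c eqD_def vf_def .
lemma vg_D: "D 2 vg" using Lg_eq unfolding Lg_c eqD_def vg_def .
lemma f_split: "f = M (c2 f 1 0) 1 0 + vf" by (simp add: vf_def)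
lemma g_split: "g = M (c2 g 0 1) 0 1 + vg" by (simp add: vg_def)
lemma c2_vf: "c2 vf i j = c2 f i j - (if i = 1 \<and> j = 0 then c2 f 1 0 else 0)"
  by (simp add: vf_def c2_M)
lemma c2_vg: "c2 vg i j = c2 g i j - (if i = 0 \<and> j = 1 then c2 g 0 1 else 0)"
  by (simp add: vg_def c2_M)

lemma uf_D: "D 1 (M (c2 f 1 0) 1 0)" by (rule Dw_M') simp
lemma ug_D: "D 1 (M (c2 g 0 1) 0 1)" by (rule Dw_M') simp

lemma Xf: "eqD (m+2) (f^m) (M (c2 f 1 0) 1 0 ^ m + of_nat m * (M (c2 f 1 0) 1 0 ^ (m-1) * vf))"
  using expand_pow[OF uf_D vf_D, of m] f_split by simp
lemma Xg: "eqD (m+2) (g^m) (M (c2 g 0 1) 0 1 ^ m + of_nat m * (M (c2 g 0 1) 0 1 ^ (m-1) * vg))"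
  using expand_pow[OF ug_D vg_D, of m] g_split by simp

lemma uf_pow_D: "D m (M (c2 f 1 0) 1 0 ^ m)" using Dw_power[OF uf_D, of m] by simp
lemma ug_pow_D: "D m (M (c2 g 0 1) 0 1 ^ m)" using Dw_power[OF ug_D, of m] by simp

lemma X2: "eqD (n+4) (f^n * g^2)
   (M (c2 f 1 0) 1 0 ^ n * M (c2 g 0 1) 0 1 ^ 2 +
    (M (c2 f 1 0) 1 0 ^ n * (of_nat 2 * (M (c2 g 0 1) 0 1 ^ (2-1) * vg)) +
     of_nat n * (M (c2 f 1 0) 1 0 ^ (n-1) * vf) * M (c2 g 0 1) 0 1 ^ 2))"
proof -
  have "eqD (n+2+2) (f^n * g^2)
   (M (c2 f 1 0) 1 0 ^ n * M (c2 g 0 1) 0 1 ^ 2 +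
    (M (c2 f 1 0) 1 0 ^ n * (of_nat 2 * (M (c2 g 0 1) 0 1 ^ (2-1) * vg)) +
     of_nat n * (M (c2 f 1 0) 1 0 ^ (n-1) * vf) * M (c2 g 0 1) 0 1 ^ 2))"
    by (rule eqD_mult2[OF Xf uf_pow_D D_P1[OF uf_D vf_D] Xg ug_pow_D D_P1[OF ug_D vg_D]]) (use n2 in auto)
  moreover have e: "n + 2 + 2 = n + 4" by simp
  ultimately show ?thesis by (simp only: e)
qed

lemma g20: "c2 g 2 0 = 0"
proof -
  let ?a = "c2 f 1 0" and ?d = "c2 g 0 1"
  have cl: "closedS n {(n+2,1)}" using n2 unfolding closedS_def by auto
  have q1: "c2 (f^n * g^2) (n+2) 1 = 2 * ?a ^ n * ?d * c2 g 2 0"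
  proof -
    have "c2 (f^n * g^2) (n+2) 1 = c2 (M (c2 f 1 0) 1 0 ^ n * M (c2 g 0 1) 0 1 ^ 2 +
    (M (c2 f 1 0) 1 0 ^ n * (of_nat 2 * (M (c2 g 0 1) 0 1 ^ (2-1) * vg)) +
     of_nat n * (M (c2 f 1 0) 1 0 ^ (n-1) * vf) * M (c2 g 0 1) 0 1 ^ 2)) (n+2) 1"
      by (rule eqD_c2[OF X2]) simp
    also have "\<dots> = 2 * ?a ^ n * ?d * c2 g 2 0"
      unfolding M_power of_nat_M by (simp add: c2_M_mult c2_mult_M_right c2_M M_mult c2_vg)
    finally show ?thesis .
  qed
  have q2: "c2 (g^(n+2)) (n+2) 1 = 0"
  proof -
    have "c2 (g^(n+2)) (n+2) 1 = c2 (M (c2 g 0 1) 0 1 ^ (n+2) + of_nat (n+2) * (M (c2 g 0 1) 0 1 ^ (n+2-1) * vg)) (n+2) 1"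
      by (rule eqD_c2[OF Xg]) simp
    also have "\<dots> = 0"
      unfolding M_power of_nat_M using n2 by (simp add: c2_M_mult c2_mult_M_right c2_M M_mult c2_vg)
    finally show ?thesis .
  qed
  have "c2 (f^n * g^2) (n+2) 1 = c2 (g^(n+2)) (n+2) 1" using ell_cong[OF cl F2] by (simp add: ell_single)
  then have "2 * ?a ^ n * ?d * c2 g 2 0 = 0" unfolding q1 q2 .
  moreover have "?a ^ n \<noteq> 0" using d_ne_a_ne by simp
  ultimately show ?thesis using two_ne d_ne_a_ne by (metis mult_eq_0_iff)
qed

end


context autA begin

lemma g_Dw13_3: "Dw 1 3 3 g"
  unfolding Dw_def
proof (intro allI impI)
  fix i j :: nat assume "1 * i + 3 * j < 3"
  then have "(i = 0 \<and> j = 0) \<or> (i = 1 \<and> j = 0) \<or> (i = 2 \<and> j = 0)" by arith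
  then show "c2 g i j = 0" using g00 c_zero g20 by auto
qed

abbreviation "Y2 \<equiv> M (c2 f 1 0) 1 0 ^ n * M (c2 g 0 1) 0 1 ^ 2 +
    (M (c2 f 1 0) 1 0 ^ n * (of_nat 2 * (M (c2 g 0 1) 0 1 ^ (2-1) * vg)) +
     of_nat n * (M (c2 f 1 0) 1 0 ^ (n-1) * vf) * M (c2 g 0 1) 0 1 ^ 2)"
abbreviation "Yg \<equiv> M (c2 g 0 1) 0 1 ^ (n+2) + of_nat (n+2) * (M (c2 g 0 1) 0 1 ^ (n+2-1) * vg)"

lemma L1: "c2 (f^n * g^2) n 3 = of_nat n * c2 f 1 0 ^ (n-1) * c2 g 0 1 ^ 2 * c2 f 1 1 + 2 * c2 f 1 0 ^ n * c2 g 0 1 * c2 g 0 2"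
proof -
  have "c2 (f^n * g^2) n 3 = c2 Y2 n 3" by (rule eqD_c2[OF X2]) simp
  also have "\<dots> = of_nat n * c2 f 1 0 ^ (n-1) * c2 g 0 1 ^ 2 * c2 f 1 1 + 2 * c2 f 1 0 ^ n * c2 g 0 1 * c2 g 0 2"
    unfolding M_power of_nat_M using n2 by (simp add: c2_M_mult c2_mult_M_right c2_M M_mult c2_vg c2_vf algebra_simps)
  finally show ?thesis .
qed

lemma L2: "c2 (f^n * g^2) 0 (n+3) = 0"
proof -
  have "c2 (f^n * g^2) 0 (n+3) = c2 Y2 0 (n+3)" by (rule eqD_c2[OF X2]) simp
  also have "\<dots> = 0"
    unfolding M_power of_nat_M using n2 by (simp add: c2_M_mult c2_mult_M_right c2_M M_mult c2_vg c2_vf)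
  finally show ?thesis .
qed

lemma R1: "c2 (g^(n+2)) n 3 = 0"
proof -
  have "c2 (g^(n+2)) n 3 = c2 Yg n 3" by (rule eqD_c2[OF Xg]) simp
  also have "\<dots> = 0"
    unfolding M_power of_nat_M using n2 g20 by (simp add: c2_M_mult c2_mult_M_right c2_M M_mult c2_vg)
  finally show ?thesis .
qed

lemma R2: "c2 (g^(n+2)) 0 (n+3) = of_nat (n+2) * c2 g 0 1 ^ (n+1) * c2 g 0 2"
proof -
  have "c2 (g^(n+2)) 0 (n+3) = c2 Yg 0 (n+3)" by (rule eqD_c2[OF Xg]) simp
  also have "\<dots> = of_nat (n+2) * c2 g 0 1 ^ (n+1) * c2 g 0 2"
    unfolding M_power of_nat_M using n2 by (simp add: c2_M_mult c2_mult_M_right c2_M M_mult c2_vg algebra_simps)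
  finally show ?thesis .
qed

lemma E7: "of_nat n * c2 f 1 0 ^ (n-1) * c2 g 0 1 ^ 2 * c2 f 1 1 + 2 * c2 f 1 0 ^ n * c2 g 0 1 * c2 g 0 2
   = of_nat (n+2) * c2 g 0 1 ^ (n+1) * c2 g 0 2"
proof (cases "n = 2")
  case True
  have cl: "closedS n {(0,n+3),(n,3),(6,0)}" using True unfolding closedS_def by auto
  have ne: "(0,n+3) \<noteq> (n,3)" "(0,n+3) \<noteq> (6,0)" "(n,3) \<noteq> (6,0)" using True by auto
  have z1: "c2 (f^n * g^2) 6 0 = 0"
  proof -
    have "Dw 1 3 (n*1 + 2*3) (f^n * g^2)" by (intro Dw_mult Dw_power f_Dw13 g_Dw13_3)
    then show ?thesis unfolding Dw_def using True by simp
  qed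
  have z2: "c2 (g^(n+2)) 6 0 = 0"
  proof -
    have "Dw 1 3 ((n+2)*3) (g^(n+2))" by (intro Dw_power g_Dw13_3)
    then show ?thesis unfolding Dw_def using True by simp
  qed
  show ?thesis using ell_cong[OF cl F2] unfolding ell_three[OF ne] L1 L2 R1 R2 z1 z2 by simp
next
  case False
  have cl: "closedS n {(0,n+3),(n,3)}" using False n2 unfolding closedS_def by auto
  have ne: "(0,n+3) \<noteq> (n,3)" using n2 by auto
  show ?thesis using ell_cong[OF cl F2] unfolding ell_two[OF ne] L1 L2 R1 R2 by simp
qed

end


context autA begin

abbreviation "Z3 \<equiv> M (c2 f 1 0) 1 0 * M (c2 g 0 1) 0 1 ^ (n+1) +
    (M (c2 f 1 0) 1 0 * (of_nat (n+1) * (M (c2 g 0 1) 0 1 ^ (n+1-1) * vg)) +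
     vf * M (c2 g 0 1) 0 1 ^ (n+1))"
abbreviation "Zf \<equiv> M (c2 f 1 0) 1 0 ^ (2*n+1) + of_nat (2*n+1) * (M (c2 f 1 0) 1 0 ^ (2*n+1-1) * vf)"

lemma X3: "eqD (n+4) (f * g^(n+1)) Z3"
proof -
  have fe: "eqD (1+2) f (M (c2 f 1 0) 1 0 + vf)" using f_split by simp
  have "eqD (1+(n+1)+2) (f * g^(n+1)) Z3"
    by (rule eqD_mult2[OF fe uf_D vf_D[folded one_add_one] Xg ug_pow_D D_P1[OF ug_D vg_D]]) simp
  moreover have e: "1 + (n+1) + 2 = n + 4" by simp
  ultimately show ?thesis by (simp only: e)
qed

lemma E8: "of_nat (2*n+1) * c2 f 1 0 ^ (2*n) * c2 f 1 1
   = c2 f 1 0 * of_nat (n+1) * c2 g 0 1 ^ n * c2 g 0 2 + c2 g 0 1 ^ (n+1) * c2 f 1 1"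
proof -
  have cl: "closedS n {(1,n+2),(n+1,2),(2*n+1,1)}" using n2 unfolding closedS_def by auto
  have ne: "(1,n+2) \<noteq> (n+1,2)" "(1,n+2) \<noteq> (2*n+1,1)" "(n+1,2) \<noteq> (2*n+1,1)" using n2 by auto
  have a1: "c2 (f^(2*n+1)) 1 (n+2) = 0"
  proof -
    have "c2 (f^(2*n+1)) 1 (n+2) = c2 Zf 1 (n+2)" by (rule eqD_c2[OF Xf]) (use n2 in simp)
    also have "\<dots> = 0" unfolding M_power of_nat_M using n2 by (simp add: c2_M_mult c2_M)
    finally show ?thesis .
  qed
  have a2: "c2 (f^(2*n+1)) (n+1) 2 = 0"
  proof -
    have "c2 (f^(2*n+1)) (n+1) 2 = c2 Zf (n+1) 2" by (rule eqD_c2[OF Xf]) (use n2 in simp)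
    also have "\<dots> = 0" unfolding M_power of_nat_M using n2 by (simp add: c2_M_mult c2_M)
    finally show ?thesis .
  qed
  have a3: "c2 (f^(2*n+1)) (2*n+1) 1 = of_nat (2*n+1) * c2 f 1 0 ^ (2*n) * c2 f 1 1"
  proof -
    have "c2 (f^(2*n+1)) (2*n+1) 1 = c2 Zf (2*n+1) 1" by (rule eqD_c2[OF Xf]) simp
    also have "\<dots> = of_nat (2*n+1) * c2 f 1 0 ^ (2*n) * c2 f 1 1"
      unfolding M_power of_nat_M using n2 by (simp add: c2_M_mult c2_M c2_vf)
    finally show ?thesis .
  qed
  have b1: "c2 (f * g^(n+1)) 1 (n+2) = c2 f 1 0 * of_nat (n+1) * c2 g 0 1 ^ n * c2 g 0 2 + c2 g 0 1 ^ (n+1) * c2 f 1 1"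
  proof -
    have "c2 (f * g^(n+1)) 1 (n+2) = c2 Z3 1 (n+2)" by (rule eqD_c2[OF X3]) simp
    also have "\<dots> = c2 f 1 0 * of_nat (n+1) * c2 g 0 1 ^ n * c2 g 0 2 + c2 g 0 1 ^ (n+1) * c2 f 1 1"
      unfolding M_power of_nat_M using n2 by (simp add: c2_M_mult c2_mult_M_right c2_M c2_vf c2_vg; simp add: algebra_simps)
    finally show ?thesis .
  qed
  have b2: "c2 (f * g^(n+1)) (n+1) 2 = 0"
  proof -
    have "c2 (f * g^(n+1)) (n+1) 2 = c2 Z3 (n+1) 2" by (rule eqD_c2[OF X3]) simp
    also have "\<dots> = 0"
      unfolding M_power of_nat_M using n2 g20 by (simp add: c2_M_mult c2_mult_M_right c2_M c2_vf c2_vg)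
    finally show ?thesis .
  qed
  have b3: "c2 (f * g^(n+1)) (2*n+1) 1 = 0"
  proof -
    have "Dw 1 3 (1 + (n+1)*3) (f * g^(n+1))" by (intro Dw_mult Dw_power f_Dw13 g_Dw13_3)
    then show ?thesis unfolding Dw_def using n2 by simp
  qed
  show ?thesis using ell_cong[OF cl F3] unfolding ell_three[OF ne] a1 a2 a3 b1 b2 b3 by simp
qed

end


lemma alg_core:
  fixes a d P Q f11 g02 N :: "'a::field"
  assumes a: "a \<noteq> 0" and d: "d \<noteq> 0" and N: "N \<noteq> 0" and N1: "N - 1 \<noteq> 0" and Q0: "Q \<noteq> 0"
    and E4: "a * P * d^2 = d^3 * Q"
    and E5: "a * (a * P)^2 = a * (d^2 * Q)"
    and E7: "N * P * d^2 * f11 + 2 * (a * P) * d * g02 = (N + 2) * (d^2 * Q) * g02"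
    and E8: "(2*N+1) * (a*P)^2 * f11 = a * (N+1) * (d * Q) * g02 + d^2 * Q * f11"
  shows "Q = 1 \<and> g02 = 0"
proof -
  have aP: "a * P = d * Q" using E4 d by (simp add: power2_eq_square power3_eq_cube)
  have "(a*P)^2 = d^2 * Q" using E5 a by simp
  then have "(d * Q)^2 = d^2 * Q" using aP by simp
  then have "(d^2 * Q) * Q = (d^2 * Q) * 1" by (simp add: power2_eq_square algebra_simps)
  then have Q: "Q = 1" using d Q0 by (subst (asm) mult_left_cancel) simp_all
  have aP1: "a * P = d" using aP Q by simp
  have "N * P * d^2 * f11 + 2 * d * d * g02 = (N + 2) * d^2 * g02" using E7 aP1 Q by simp
  then have "N * (P * f11) * d^2 = N * g02 * d^2" by (simp add: power2_eq_square algebra_simps)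
  then have Pf: "P * f11 = g02" using N d by simp
  have dfa: "d * f11 = a * g02" using Pf aP1 by (metis mult.assoc)
  have "(2*N+1) * d^2 * f11 = a * (N+1) * d * g02 + d^2 * f11" using E8 aP1 Q by simp
  then have "2*N * d * (d * f11) = (N+1) * d * (a * g02)" by (simp add: power2_eq_square algebra_simps)
  then have "2*N * d * (a * g02) = (N+1) * d * (a * g02)" using dfa by simp
  then have "(N - 1) * (d * a * g02) = 0" by (simp add: algebra_simps)
  then have "g02 = 0" using N1 a d by simp
  then show ?thesis using Q by simp
qed


context autA begin

lemma final_alg: "c2 g 0 1 ^ (n-1) = 1 \<and> c2 g 0 2 = 0"
proof -
  let ?a = "c2 f 1 0" and ?d = "c2 g 0 1" and ?f11 = "c2 f 1 1" and ?g02 = "c2 g 0 2"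
  obtain m where nm: "n = Suc m" using n2 by (cases n) auto
  let ?P = "?a ^ m" and ?Q = "?d ^ m" and ?N = "(of_nat n :: 'a)"
  have a: "?a \<noteq> 0" and d: "?d \<noteq> 0" using d_ne_a_ne by auto
  have N1: "?N - 1 \<noteq> 0" using n1_ne n2 by (simp add: of_nat_diff)
  have Q0: "?Q \<noteq> 0" using d by simp
  have e4: "?a * ?P * ?d^2 = ?d^3 * ?Q" using E4 unfolding nm by (simp add: power_add algebra_simps power2_eq_square power3_eq_cube)
  have e5: "?a * (?a * ?P)^2 = ?a * (?d^2 * ?Q)" using E5 unfolding nm by (simp add: power_add algebra_simps power2_eq_square power_mult)
  have e7: "?N * ?P * ?d^2 * ?f11 + 2 * (?a * ?P) * ?d * ?g02 = (?N + 2) * (?d^2 * ?Q) * ?g02"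
    using E7 unfolding nm by (simp add: power_add algebra_simps power2_eq_square)
  have e8: "(2*?N+1) * (?a*?P)^2 * ?f11 = ?a * (?N+1) * (?d * ?Q) * ?g02 + ?d^2 * ?Q * ?f11"
    using E8 unfolding nm by (simp add: power_add algebra_simps power2_eq_square power_mult)
  have "?Q = 1 \<and> ?g02 = 0" by (rule alg_core[OF a d n_ne N1 Q0 e4 e5 e7 e8])
  then show ?thesis using nm by simp
qed

end


lemma supp_Dw: "c2 p i j \<noteq> 0 \<Longrightarrow> Dw w1 w2 k p \<Longrightarrow> k \<le> w1*i + w2*j"
  unfolding Dw_def by (meson not_le)

context autA begin

lemma vg_supp: "c2 vg i j \<noteq> 0 \<Longrightarrow> 2 \<le> i + j \<and> (i,j) \<noteq> (0,2) \<and> (i,j) \<noteq> (2,0)"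
proof -
  assume h: "c2 vg i j \<noteq> 0"
  have "2 \<le> i + j" using supp_Dw[OF h vg_D] by simp
  moreover have z: "c2 vg 0 2 = 0" "c2 vg 2 0 = 0" using final_alg g20 by (simp_all add: c2_vg)
  moreover have "(i,j) \<noteq> (0,2)"
  proof
    assume "(i,j) = (0,2)" then show False using h z by simp
  qed
  moreover have "(i,j) \<noteq> (2,0)"
  proof
    assume "(i,j) = (2,0)" then show False using h z by simp
  qed
  ultimately show ?thesis by blast
qed

lemma term_in_I:
  assumes K: "1 \<le> K" "K \<le> 2*n+1"
  shows "of_nat C * vg^K * M (c2 g 0 1) 0 1 ^ (2*n+1-K) \<in> I_n n"
proof (rule supp_in_I[OF n2])
  fix i j assume h: "c2 (of_nat C * vg^K * M (c2 g 0 1) 0 1 ^ (2*n+1-K)) i j \<noteq> 0"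
  show "Zc n i j"
  proof (cases "K = 1")
    case True
    then have h': "c2 (M (of_nat C) 0 0 * vg * M (c2 g 0 1 ^ (2*n)) 0 (2*n)) i j \<noteq> 0"
      using h by (simp add: of_nat_M M_power)
    then have j: "2*n \<le> j" and v: "c2 vg i (j - 2*n) \<noteq> 0"
      unfolding c2_mult_M_right mult.assoc c2_M_mult by (auto split: if_splits)
    show ?thesis using vg_supp[OF v] j n2 unfolding Zc_def by auto
  next
    case False
    then have K2: "2 \<le> K" using K by simp
    have P: "of_nat C * vg^K * M (c2 g 0 1) 0 1 ^ (2*n+1-K) = M (of_nat C) 0 0 * vg^K * M (c2 g 0 1 ^ (2*n+1-K)) 0 (2*n+1-K)"
      by (simp add: of_nat_M M_power)
    have d1: "Dw 1 1 (0 + K*2 + (2*n+1-K)) (M (of_nat C) 0 0 * vg^K * M (c2 g 0 1 ^ (2*n+1-K)) 0 (2*n+1-K))"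
      by (intro Dw_mult Dw_power vg_D Dw_M') simp_all
    have d2: "Dw 0 1 (0 + 0 + (2*n+1-K)) (M (of_nat C) 0 0 * vg^K * M (c2 g 0 1 ^ (2*n+1-K)) 0 (2*n+1-K))"
      by (intro Dw_mult Dw_zero_ord Dw_M') simp
    have s1: "K*2 + (2*n+1-K) \<le> i + j" using supp_Dw[OF h[unfolded P] d1] by simp
    have s2: "2*n+1-K \<le> j" using supp_Dw[OF h[unfolded P] d2] by simp
    show ?thesis using s1 s2 K K2 n2 unfolding Zc_def by arith
  qed
qed

lemma gpow_final: "cong_A n (g^(2*n+1)) (M (c2 g 0 1 ^ (2*n+1)) 0 (2*n+1))"
proof -
  let ?u = "M (c2 g 0 1) 0 1" and ?m = "Suc (2*n)"
  define t where "t k = of_nat (?m choose k) * vg^k * ?u^(?m-k)" for k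
  have "g^?m = (vg + ?u)^?m" using g_split by (simp add: add.commute)
  also have "\<dots> = (\<Sum>k\<le>?m. t k)" unfolding t_def by (rule binomial_ring)
  also have "\<dots> = t 0 + (\<Sum>k\<le>2*n. t (Suc k))" by (rule sum.atMost_Suc_shift)
  finally have gm: "g^?m = t 0 + (\<Sum>k\<le>2*n. t (Suc k))" .
  have t0: "t 0 = M (c2 g 0 1 ^ ?m) 0 ?m" unfolding t_def by (simp only: M_power) simp
  have "(\<Sum>k\<le>2*n. t (Suc k)) \<in> I_n n"
  proof (rule I_sum)
    fix k assume "k \<in> {..2*n}"
    then have k: "1 \<le> Suc k" "Suc k \<le> 2*n+1" by auto
    have e: "2*n+1 - Suc k = ?m - Suc k" by simp
    show "t (Suc k) \<in> I_n n" unfolding t_def by (rule term_in_I[OF k, unfolded e])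
  qed
  then have "cong_A n (g^?m) (M (c2 g 0 1 ^ ?m) 0 ?m)" unfolding cong_A_def gm t0 by simp
  then show ?thesis by simp
qed

end

theorem theorem1p1:
  fixes n :: nat and \<phi> :: "'a::field poly poly \<Rightarrow> 'a poly poly"
  assumes "n \<ge> 2"
    and "CHAR('a) = 0 \<or> (coprime (CHAR('a)) n \<and> coprime (CHAR('a)) (n - 1))"
    and "is_aut_A n \<phi>"
  shows "\<exists>\<gamma>::'a. cong_A n (\<phi> (var_y ^ (2*n+1))) (const2 \<gamma> * var_y ^ (2*n+1)) \<and>
           (if n mod 3 = 1 then \<gamma> ^ ((n - 1) div 3) = 1 else \<gamma> ^ (n - 1) = 1)"
proof -
  interpret A: autA n \<phi> using assms by unfold_locales
  let ?d = "c2 A.g 0 1"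
  let ?\<gamma> = "?d ^ (2*n+1)"
  have c1: "cong_A n (\<phi> (var_y ^ (2*n+1))) (M ?\<gamma> 0 (2*n+1))"
    using cong_trans[OF A.Fy A.gpow_final] .
  have e: "const2 ?\<gamma> * var_y ^ (2*n+1) = M ?\<gamma> 0 (2*n+1)"
    by (simp add: const2_M var_y_M M_power M_mult)
  have dn: "?d ^ (n-1) = 1" using A.final_alg by simp
  have g3: "?\<gamma> = ?d ^ 3"
  proof -
    have ee: "2*n+1 = 3 + (n-1)*2" using assms(1) by simp
    have "?\<gamma> = ?d^(3 + (n-1)*2)" by (simp only: ee)
    also have "\<dots> = ?d^3 * (?d^(n-1))^2" by (simp only: power_add power_mult)
    finally show ?thesis using dn by simp
  qed
  have pw: "(if n mod 3 = 1 then ?\<gamma> ^ ((n - 1) div 3) = 1 else ?\<gamma> ^ (n - 1) = 1)"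
  proof (cases "n mod 3 = 1")
    case True
    then have "3 * ((n-1) div 3) = n - 1" using assms(1) by presburger
    then have "?\<gamma> ^ ((n - 1) div 3) = ?d ^ (n-1)" unfolding g3 by (metis power_mult)
    then show ?thesis using True dn by simp
  next
    case False
    have "?\<gamma> ^ (n - 1) = (?d ^ (n-1)) ^ 3" unfolding g3 by (metis power_mult mult.commute)
    then show ?thesis using False dn by simp
  qed
  show ?thesis using c1 pw unfolding e[symmetric] by blast
qed


end
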